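(* Let $(M,g)$ be a two-dimensional Riemannian manifold and $\xi$ a conformal Killing vector of $g$. Let $D$ be a real, symmetric, 2-covariant tensor which is transverse and traceless with respect to $g$ and satisfies the KID equation $\pounds_\xi D=0$. Then $D$ is a linear combination with constant coefficients of $$D_\xi:=\frac{1}{|\xi|_g^4}\Big(\boldsymbol{\xi}\otimes\boldsymbol{\xi}-\tfrac12|\xi|_g^2\,g\Big),\qquad D_{\xi,\xi^\perp}:=\frac{1}{2|\xi|_g^2|\xi^\perp|_g^2}\Big(\boldsymbol{\xi}\otimes\boldsymbol{\xi^\perp}+\boldsymbol{\xi^\perp}\otimes\boldsymbol{\xi}\Big),$$ where $\boldsymbol{\xi}:=g(\xi,\cdot)$ and $\boldsymbol{\xi^\perp}:=g(\xi^\perp,\cdot)$.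
   Context: Transverse and traceless means $\nabla_\alpha D^{\alpha\beta}=0$ and $D^\alpha{}_\alpha=0$, with indices raised by $g$ and $\nabla$ its Levi-Civita connection. In dimension $n$ the KID equation is $\pounds_\xi D+\frac{n-2}{n}(\mathrm{div}_g\xi)D=0$, which for $n=2$ reduces to $\pounds_\xi D=0$. $|\xi|_g^2=g(\xi,\xi)$. The vector field $\xi^\perp$ is a conformal Killing vector of $g$ which is everywhere orthogonal to $\xi$ and has the same norm as $\xi$ at every point (it is unique up to a global sign; in local coordinates $z$ with $g$ conformal to $4\,dz\,d\bar z$ and $\xi=f\partial_z+\bar f\partial_{\bar z}$, it is $\xi^\perp=i(f\partial_z-\bar f\partial_{\bar z})$). The tensors $D_\xi, D_{\xi,\xi^\perp}$ are defined where $\xi\neq0$; the result is local. *)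

theory Defs
  imports "HOL-Analysis.Analysis"
begin

text \<open>Local-coordinate rendering of 2-dimensional Riemannian geometry.\<close>

type_synonym pt = "real ^ 2"
type_synonym sfun = "pt \<Rightarrow> real"
type_synonym vfield = "pt \<Rightarrow> real ^ 2"          \<comment> \<open>contravariant components xi^i\<close>
type_synonym tfield = "pt \<Rightarrow> real ^ 2 ^ 2"      \<comment> \<open>covariant components T_ij = T x $ i $ j\<close>

definition pd :: "2 \<Rightarrow> sfun \<Rightarrow> sfun" where
  "pd i f x = frechet_derivative f (at x) (axis i 1)"

fun Ck_on :: "nat \<Rightarrow> sfun \<Rightarrow> pt set \<Rightarrow> bool" where
  "Ck_on 0 f U = continuous_on U f"
| "Ck_on (Suc k) f U = (f differentiable_on U \<and> (\<forall>i. Ck_on k (pd i f) U))"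

definition smooth_fun_on :: "sfun \<Rightarrow> pt set \<Rightarrow> bool" where
  "smooth_fun_on f U \<longleftrightarrow> (\<forall>k. Ck_on k f U)"

definition smooth_vfield_on :: "vfield \<Rightarrow> pt set \<Rightarrow> bool" where
  "smooth_vfield_on v U \<longleftrightarrow> (\<forall>i. smooth_fun_on (\<lambda>x. v x $ i) U)"

definition smooth_tfield_on :: "tfield \<Rightarrow> pt set \<Rightarrow> bool" where
  "smooth_tfield_on T U \<longleftrightarrow> (\<forall>i j. smooth_fun_on (\<lambda>x. T x $ i $ j) U)"

definition symmetric_tfield_on :: "tfield \<Rightarrow> pt set \<Rightarrow> bool" where
  "symmetric_tfield_on T U \<longleftrightarrow> (\<forall>x\<in>U. \<forall>i j. T x $ i $ j = T x $ j $ i)"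

definition riemannian_metric_on :: "tfield \<Rightarrow> pt set \<Rightarrow> bool" where
  "riemannian_metric_on g U \<longleftrightarrow>
     smooth_tfield_on g U \<and> symmetric_tfield_on g U \<and>
     (\<forall>x\<in>U. \<forall>v::real^2. v \<noteq> 0 \<longrightarrow> (\<Sum>i\<in>UNIV. \<Sum>j\<in>UNIV. g x $ i $ j * v $ i * v $ j) > 0)"

definition ginv :: "tfield \<Rightarrow> tfield" where
  "ginv g x = matrix_inv (g x)"

text \<open>Christoffel symbols Gamma^k_ij = christoffel g x k i j.\<close>
definition christoffel :: "tfield \<Rightarrow> pt \<Rightarrow> 2 \<Rightarrow> 2 \<Rightarrow> 2 \<Rightarrow> real" where
  "christoffel g x k i j =
     (1/2) * (\<Sum>l\<in>UNIV. ginv g x $ k $ l *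
        (pd i (\<lambda>y. g y $ j $ l) x + pd j (\<lambda>y. g y $ i $ l) x - pd l (\<lambda>y. g y $ i $ j) x))"

text \<open>Covariant derivative of a covariant 2-tensor: (nabla_a T)_bc = cov_deriv g T x a b c.\<close>
definition cov_deriv :: "tfield \<Rightarrow> tfield \<Rightarrow> pt \<Rightarrow> 2 \<Rightarrow> 2 \<Rightarrow> 2 \<Rightarrow> real" where
  "cov_deriv g T x a b c =
     pd a (\<lambda>y. T y $ b $ c) x
     - (\<Sum>l\<in>UNIV. christoffel g x l a b * T x $ l $ c)
     - (\<Sum>l\<in>UNIV. christoffel g x l a c * T x $ b $ l)"

text \<open>Transverse: nabla_a D^{ab} = 0, written with the first index raised and the
  free index lowered (equivalent by metric compatibility): g^{ac} nabla_a D_{cb} = 0.\<close>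
definition transverse_on :: "tfield \<Rightarrow> tfield \<Rightarrow> pt set \<Rightarrow> bool" where
  "transverse_on g D U \<longleftrightarrow>
     (\<forall>x\<in>U. \<forall>b. (\<Sum>a\<in>UNIV. \<Sum>c\<in>UNIV. ginv g x $ a $ c * cov_deriv g D x a c b) = 0)"

definition traceless_on :: "tfield \<Rightarrow> tfield \<Rightarrow> pt set \<Rightarrow> bool" where
  "traceless_on g D U \<longleftrightarrow> (\<forall>x\<in>U. (\<Sum>a\<in>UNIV. \<Sum>b\<in>UNIV. ginv g x $ a $ b * D x $ a $ b) = 0)"

definition lie_deriv :: "vfield \<Rightarrow> tfield \<Rightarrow> pt \<Rightarrow> 2 \<Rightarrow> 2 \<Rightarrow> real" where
  "lie_deriv v T x i j =
     (\<Sum>k\<in>UNIV. v x $ k * pd k (\<lambda>y. T y $ i $ j) x)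
     + (\<Sum>k\<in>UNIV. T x $ k $ j * pd i (\<lambda>y. v y $ k) x)
     + (\<Sum>k\<in>UNIV. T x $ i $ k * pd j (\<lambda>y. v y $ k) x)"

definition conformal_killing_on :: "tfield \<Rightarrow> vfield \<Rightarrow> pt set \<Rightarrow> bool" where
  "conformal_killing_on g v U \<longleftrightarrow> smooth_vfield_on v U \<and>
     (\<exists>psi :: sfun. \<forall>x\<in>U. \<forall>i j. lie_deriv v g x i j = psi x * g x $ i $ j)"

definition gdot :: "tfield \<Rightarrow> pt \<Rightarrow> real^2 \<Rightarrow> real^2 \<Rightarrow> real" where
  "gdot g x u w = (\<Sum>i\<in>UNIV. \<Sum>j\<in>UNIV. g x $ i $ j * u $ i * w $ j)"

text \<open>Metric dual one-form (boldface xi): xi_i = g_ij xi^j.\<close>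
definition flat :: "tfield \<Rightarrow> vfield \<Rightarrow> pt \<Rightarrow> real^2" where
  "flat g v x = (\<chi> i. \<Sum>j\<in>UNIV. g x $ i $ j * v x $ j)"

definition D_xi :: "tfield \<Rightarrow> vfield \<Rightarrow> tfield" where
  "D_xi g v x = (\<chi> i j. (flat g v x $ i * flat g v x $ j - (1/2) * gdot g x (v x) (v x) * g x $ i $ j)
                        / (gdot g x (v x) (v x))^2)"

definition D_xi_perp :: "tfield \<Rightarrow> vfield \<Rightarrow> vfield \<Rightarrow> tfield" where
  "D_xi_perp g v w x = (\<chi> i j. (flat g v x $ i * flat g w x $ j + flat g w x $ i * flat g v x $ j)
                        / (2 * gdot g x (v x) (v x) * gdot g x (w x) (w x)))"

end

theory Submission
  imports Defs
begin



lemma pd_has: "(f has_derivative f') (at x) \<Longrightarrow> pd k f x = f' (axis k 1)"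
  unfolding pd_def using frechet_derivative_at by metis

lemma pd_fd: "pd k f x = frechet_derivative f (at x) (axis k 1)"
  by (simp add: pd_def)

lemma pd_add: "f differentiable at x \<Longrightarrow> g differentiable at x \<Longrightarrow>
   pd k (\<lambda>y. f y + g y) x = pd k f x + pd k g x"
  unfolding differentiable_def
  apply (elim exE)
  subgoal for F G
    using has_derivative_add[of f F "at x" g G] pd_has by metis
  done

lemma pd_diff: "f differentiable at x \<Longrightarrow> g differentiable at x \<Longrightarrow>
   pd k (\<lambda>y. f y - g y) x = pd k f x - pd k g x"
  unfolding differentiable_def
  apply (elim exE)
  subgoal for F G
    using has_derivative_diff[of f F "at x" g G] pd_has by metis
  done

lemma pd_mult: "f differentiable at x \<Longrightarrow> g differentiable at x \<Longrightarrow>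
   pd k (\<lambda>y. f y * g y) x = f x * pd k g x + pd k f x * g x"
  unfolding differentiable_def
  apply (elim exE)
  subgoal for F G
  proof -
    assume a: "(f has_derivative F) (at x)" "(g has_derivative G) (at x)"
    have "((\<lambda>y. f y * g y) has_derivative (\<lambda>h. f x * G h + F h * g x)) (at x)"
      using has_derivative_mult[OF a] .
    then show ?thesis using pd_has[OF a(1)] pd_has[OF a(2)] pd_has by metis
  qed
  done

lemma pd_const: "pd k (\<lambda>y. c) x = 0"
  using pd_has[OF has_derivative_const] by simp

lemma pd_sum: "finite S \<Longrightarrow> (\<And>i. i \<in> S \<Longrightarrow> f i differentiable at x) \<Longrightarrow>
   pd k (\<lambda>y. \<Sum>i\<in>S. f i y) x = (\<Sum>i\<in>S. pd k (f i) x)"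
proof (induction S rule: finite_induct)
  case empty then show ?case by (simp add: pd_const)
next
  case (insert a S)
  have "pd k (\<lambda>y. \<Sum>i\<in>insert a S. f i y) x = pd k (\<lambda>y. f a y + (\<Sum>i\<in>S. f i y)) x"
    using insert by simp
  also have "\<dots> = pd k (f a) x + pd k (\<lambda>y. \<Sum>i\<in>S. f i y) x"
    apply (rule pd_add) using insert by (auto intro!: differentiable_sum)
  finally show ?case using insert by simp
qed

lemma pd_local: "open U \<Longrightarrow> x \<in> U \<Longrightarrow> (\<And>y. y \<in> U \<Longrightarrow> f y = g y) \<Longrightarrow> g differentiable at x \<Longrightarrow>
   pd k f x = pd k g x"
  unfolding pd_def using frechet_derivative_transform_within_open by metis

lemma pd_zero: "open U \<Longrightarrow> x \<in> U \<Longrightarrow> (\<And>y. y \<in> U \<Longrightarrow> f y = c) \<Longrightarrow> pd k f x = 0"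
  using pd_local[of U x f "\<lambda>y. c" k] pd_const by auto




definition bil :: "real^2^2 \<Rightarrow> real^2 \<Rightarrow> real^2 \<Rightarrow> real" where
  "bil T u v = (\<Sum>b\<in>UNIV. \<Sum>c\<in>UNIV. T$b$c * u$b * v$c)"
definition dirv :: "vfield \<Rightarrow> sfun \<Rightarrow> pt \<Rightarrow> real" where
  "dirv X f x = (\<Sum>a\<in>UNIV. X x$a * pd a f x)"
definition nab :: "tfield \<Rightarrow> vfield \<Rightarrow> vfield \<Rightarrow> pt \<Rightarrow> real^2" where
  "nab g X Y x = (\<chi> l. (\<Sum>a\<in>UNIV. X x$a * pd a (\<lambda>y. Y y$l) x) +
      (\<Sum>a\<in>UNIV. \<Sum>c\<in>UNIV. christoffel g x l a c * X x$a * Y x$c))"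
definition brk :: "vfield \<Rightarrow> vfield \<Rightarrow> pt \<Rightarrow> real^2" where
  "brk X Y x = (\<chi> l. \<Sum>a\<in>UNIV. X x$a * pd a (\<lambda>y. Y y$l) x - Y x$a * pd a (\<lambda>y. X y$l) x)"
definition cdv :: "vfield \<Rightarrow> pt \<Rightarrow> bool" where
  "cdv Y x \<longleftrightarrow> (\<forall>i. (\<lambda>y. Y y$i) differentiable at x)"
definition cdt :: "tfield \<Rightarrow> pt \<Rightarrow> bool" where
  "cdt T x \<longleftrightarrow> (\<forall>i j. (\<lambda>y. T y$i$j) differentiable at x)"

lemma pd_bil:
  assumes "cdt T x" "cdv Y x" "cdv Z x"
  shows "pd a (\<lambda>y. bil (T y) (Y y) (Z y)) x =
    (\<Sum>b\<in>UNIV. \<Sum>c\<in>UNIV. pd a (\<lambda>y. T y$b$c) x * Y x$b * Z x$c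
        + T x$b$c * pd a (\<lambda>y. Y y$b) x * Z x$c + T x$b$c * Y x$b * pd a (\<lambda>y. Z y$c) x)"
  using assms unfolding bil_def cdt_def cdv_def
  by (simp add: pd_sum pd_mult algebra_simps)

lemma G1:
  assumes "cdt T x" "cdv Y x" "cdv Z x"
  shows "(\<Sum>a\<in>UNIV. \<Sum>b\<in>UNIV. \<Sum>c\<in>UNIV. X x$a * Y x$b * Z x$c * cov_deriv g T x a b c)
     = dirv X (\<lambda>y. bil (T y) (Y y) (Z y)) x - bil (T x) (nab g X Y x) (Z x) - bil (T x) (Y x) (nab g X Z x)"
  unfolding dirv_def pd_bil[OF assms]
  unfolding bil_def nab_def cov_deriv_def
  by (simp add: sum_2 algebra_simps)

lemma G3:
  assumes "cdt T x" "cdv Y x" "cdv Z x"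
  shows "dirv X (\<lambda>y. bil (T y) (Y y) (Z y)) x = (\<Sum>b\<in>UNIV. \<Sum>c\<in>UNIV. lie_deriv X T x b c * Y x$b * Z x$c)
     + bil (T x) (brk X Y x) (Z x) + bil (T x) (Y x) (brk X Z x)"
  unfolding dirv_def pd_bil[OF assms]
  unfolding bil_def brk_def lie_deriv_def
  by (simp add: sum_2 algebra_simps)




lemma chr_low:
  assumes GH: "g x ** ginv g x = mat 1" and symg: "\<And>i j. g x$i$j = g x$j$i"
  shows "(\<Sum>l\<in>UNIV. christoffel g x l a b * g x$l$c) =
     (1/2) * (pd a (\<lambda>y. g y $ b $ c) x + pd b (\<lambda>y. g y $ a $ c) x - pd c (\<lambda>y. g y $ a $ b) x)"
proof -
  define V where "V m = pd a (\<lambda>y. g y $ b $ m) x + pd b (\<lambda>y. g y $ a $ m) x - pd m (\<lambda>y. g y $ a $ b) x" for m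
  have e: "g x$c$1 * ginv g x$1$m + g x$c$2 * ginv g x$2$m = (if c = m then 1 else 0)" for m
  proof -
    have "(g x ** ginv g x)$c$m = (if c = m then 1 else 0)" using GH by (simp add: mat_def)
    then show ?thesis by (simp add: matrix_matrix_mult_def sum_2)
  qed
  have "(\<Sum>l\<in>UNIV. christoffel g x l a b * g x$l$c) =
     (1/2) * (\<Sum>m\<in>UNIV. (g x$c$1 * ginv g x$1$m + g x$c$2 * ginv g x$2$m) * V m)"
    unfolding christoffel_def V_def by (simp add: sum_2 symg[of _ c] algebra_simps)
  also have "\<dots> = (1/2) * V c" unfolding e using exhaust_2[of c] by (auto simp: sum_2)
  finally show ?thesis by (simp add: V_def)
qed

lemma G2:
  assumes GH: "g x ** ginv g x = mat 1" and symg: "\<And>i j. g x$i$j = g x$j$i"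
    and symd: "\<And>k i j. pd k (\<lambda>y. g y$i$j) x = pd k (\<lambda>y. g y$j$i) x"
  shows "cov_deriv g g x a b c = 0"
proof -
  have "(\<Sum>l\<in>UNIV. christoffel g x l a c * g x$b$l) = (\<Sum>l\<in>UNIV. christoffel g x l a c * g x$l$b)"
    by (simp add: symg[of b])
  then show ?thesis unfolding cov_deriv_def chr_low[OF GH symg]
    using symd[of a c b] by (simp add: algebra_simps)
qed

lemma chr_sym:
  assumes symd: "\<And>k i j. pd k (\<lambda>y. g y$i$j) x = pd k (\<lambda>y. g y$j$i) x"
  shows "christoffel g x l a c = christoffel g x l c a"
  unfolding christoffel_def using symd by (simp add: algebra_simps)

lemma G4:
  assumes symd: "\<And>k i j. pd k (\<lambda>y. g y$i$j) x = pd k (\<lambda>y. g y$j$i) x"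
  shows "nab g X Y x - nab g Y X x = brk X Y x"
proof -
  have "(\<Sum>a\<in>UNIV. \<Sum>c\<in>UNIV. christoffel g x l a c * X x$a * Y x$c) =
        (\<Sum>a\<in>UNIV. \<Sum>c\<in>UNIV. christoffel g x l a c * Y x$a * X x$c)" for l
    using chr_sym[OF symd, of l] by (simp add: sum_2 algebra_simps)
  then show ?thesis unfolding nab_def brk_def
    by (simp add: vec_eq_iff sum_subtractf)
qed




lemma bil_sym: "(\<And>i j. G$i$j = G$j$i) \<Longrightarrow> bil G u v = bil G v u"
  unfolding bil_def by (simp add: sum_2 algebra_simps)

lemma bil_lin1: "bil G (a *\<^sub>R u + b *\<^sub>R v) w = a * bil G u w + b * bil G v w"
  unfolding bil_def by (simp add: sum_2 algebra_simps)
lemma bil_lin2: "bil G w (a *\<^sub>R u + b *\<^sub>R v) = a * bil G w u + b * bil G w v"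
  unfolding bil_def by (simp add: sum_2 algebra_simps)
lemma bil_diff1: "bil G (u - v) w = bil G u w - bil G v w"
  unfolding bil_def by (simp add: sum_2 algebra_simps)
lemma bil_diff2: "bil G w (u - v) = bil G w u - bil G w v"
  unfolding bil_def by (simp add: sum_2 algebra_simps)
lemma bil_add1: "bil G (u + v) w = bil G u w + bil G v w"
  unfolding bil_def by (simp add: sum_2 algebra_simps)
lemma bil_zero1: "bil G 0 w = 0"
  unfolding bil_def by (simp add: sum_2)

locale frame =
  fixes G :: "real^2^2" and xi xp :: "real^2" and N :: real
  assumes symG: "\<And>i j. G$i$j = G$j$i"
    and pos: "\<And>v. v \<noteq> 0 \<Longrightarrow> bil G v v > 0"
    and nxi: "bil G xi xi = N" and nxp: "bil G xp xp = N" and orth: "bil G xi xp = 0"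
    and xinz: "xi \<noteq> 0"
begin

lemma Npos: "N > 0" using pos[OF xinz] nxi by simp

definition "dt = xi$1*xp$2 - xi$2*xp$1"

lemma dt_nz: "dt \<noteq> 0"
proof
  assume d: "dt = 0"
  have "xp$1 * bil G xi xi - xi$1 * bil G xi xp = - dt * (G$1$2*xi$1 + G$2$2*xi$2)"
    unfolding bil_def dt_def by (simp add: sum_2 algebra_simps)
  then have 1: "xp$1 = 0" using d nxi orth Npos by simp
  have "xp$2 * bil G xi xi - xi$2 * bil G xi xp = dt * (G$1$1*xi$1 + G$2$1*xi$2)"
    unfolding bil_def dt_def by (simp add: sum_2 algebra_simps)
  then have 2: "xp$2 = 0" using d nxi orth Npos by simp
  have "xp = 0" using 1 2 by (simp add: vec_eq_iff forall_2)
  then show False using nxp Npos by (simp add: bil_zero1)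
qed

lemma L0:
  fixes r :: "real^2"
  assumes "r$1*xi$1 + r$2*xi$2 = 0" "r$1*xp$1 + r$2*xp$2 = 0"
  shows "r = 0"
proof -
  have "r$1 * dt = xp$2*(r$1*xi$1 + r$2*xi$2) - xi$2*(r$1*xp$1 + r$2*xp$2)"
    unfolding dt_def by (simp add: algebra_simps)
  then have 1: "r$1 = 0" using assms dt_nz by simp
  have "r$2 * dt = xi$1*(r$1*xp$1 + r$2*xp$2) - xp$1*(r$1*xi$1 + r$2*xi$2)"
    unfolding dt_def by (simp add: algebra_simps)
  then have 2: "r$2 = 0" using assms dt_nz by simp
  show ?thesis using 1 2 by (simp add: vec_eq_iff forall_2)
qed

lemma nondeg:
  assumes "bil G w xi = 0" "bil G w xp = 0"
  shows "w = 0"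
proof -
  define u where "u = (\<chi> j. w$1*G$1$j + w$2*G$2$j)"
  have "u$1*xi$1 + u$2*xi$2 = bil G w xi" "u$1*xp$1 + u$2*xp$2 = bil G w xp"
    unfolding u_def bil_def by (simp_all add: sum_2 algebra_simps)
  then have "u = 0" using assms L0 by simp
  moreover have "bil G w w = u$1*w$1 + u$2*w$2"
    unfolding u_def bil_def by (simp add: sum_2 algebra_simps)
  ultimately have "bil G w w = 0" by simp
  then show ?thesis using pos by force
qed

lemma dec: "v = (bil G v xi / N) *\<^sub>R xi + (bil G v xp / N) *\<^sub>R xp"
proof -
  define w where "w = v - ((bil G v xi / N) *\<^sub>R xi + (bil G v xp / N) *\<^sub>R xp)"
  have s: "bil G xp xi = 0" using orth bil_sym[OF symG] by metis
  have "bil G w xi = 0" "bil G w xp = 0"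
    unfolding w_def bil_diff1 bil_lin1 using nxi nxp orth s Npos by simp_all
  then have "w = 0" by (rule nondeg)
  then show ?thesis unfolding w_def by simp
qed

end




context frame begin

definition "M = (\<chi> i j. (xi$i*xi$j + xp$i*xp$j)/N)"

lemma MG: "M ** G = mat 1"
proof -
  have d: "(axis j 1 :: real^2)$i = (bil G (axis j 1) xi / N) * xi$i + (bil G (axis j 1) xp / N) * xp$i" for i j
    using arg_cong[OF dec[of "axis j 1"], of "\<lambda>v. v$i"] by simp
  have e: "(M ** G)$i$j = (bil G (axis j 1) xi / N) * xi$i + (bil G (axis j 1) xp / N) * xp$i" for i j
  proof -
    have "(M ** G)$i$j = (xi$i * (xi$1*G$1$j + xi$2*G$2$j) + xp$i * (xp$1*G$1$j + xp$2*G$2$j))/N"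
      unfolding M_def by (simp add: matrix_matrix_mult_def sum_2 add_divide_distrib[symmetric]) (simp add: algebra_simps)
    moreover have "bil G (axis j 1) xi = xi$1*G$1$j + xi$2*G$2$j" "bil G (axis j 1) xp = xp$1*G$1$j + xp$2*G$2$j"
      unfolding bil_def using exhaust_2[of j] by (auto simp: sum_2 axis_def symG[of 1 2])
    ultimately show ?thesis by (simp add: algebra_simps add_divide_distrib)
  qed
  have "(M ** G)$i$j = (mat 1 :: real^2^2)$i$j" for i j
    unfolding e d[symmetric] by (simp add: mat_def axis_def)
  then show ?thesis by (simp add: vec_eq_iff)
qed

lemma GM: "G ** M = mat 1" using MG matrix_left_right_inverse by blast

lemma ginv_M: "matrix_inv G = M"
proof -
  have "\<exists>A'. G ** A' = mat 1 \<and> A' ** G = mat 1" using MG GM by blast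
  then have h: "G ** matrix_inv G = mat 1 \<and> matrix_inv G ** G = mat 1"
    unfolding matrix_inv_def by (rule someI_ex)
  have "matrix_inv G = matrix_inv G ** (G ** M)" by (simp add: GM)
  also have "\<dots> = M" by (simp add: matrix_mul_assoc h)
  finally show ?thesis .
qed

end



lemma bil_mdiff: "bil (P - Q) u v = bil P u v - bil Q u v"
  unfolding bil_def by (simp add: sum_2 algebra_simps)

context frame begin

lemma sxp: "bil G xp xi = 0" using orth bil_sym[OF symG] by metis

lemma trace_M: "(\<Sum>a\<in>UNIV. \<Sum>b\<in>UNIV. M$a$b * Dm$a$b) = (bil Dm xi xi + bil Dm xp xp) / N"
  unfolding M_def bil_def by (simp add: sum_2 add_divide_distrib[symmetric]) (simp add: algebra_simps)

lemma decD:
  "bil Dm u v = (bil G v xi / N) * bil Dm u xi + (bil G v xp / N) * bil Dm u xp"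
  by (subst dec[of v]) (simp only: bil_lin2)

lemma recon:
  fixes Dm :: "real^2^2"
  assumes symD: "\<And>i j. Dm$i$j = Dm$j$i" and tr: "bil Dm xi xi + bil Dm xp xp = 0"
  defines "A \<equiv> bil Dm xi xi" and "B \<equiv> bil Dm xi xp"
  defines "a \<equiv> (\<chi> i. \<Sum>j\<in>UNIV. G$i$j * xi$j)" and "b \<equiv> (\<chi> i. \<Sum>j\<in>UNIV. G$i$j * xp$j)"
  shows "Dm$i$j = 2*A * ((a$i*a$j - (1/2)*N*G$i$j)/N^2) + 2*B * ((a$i*b$j + b$i*a$j)/(2*N*N))"
proof -
  define R :: "real^2^2" where "R = (\<chi> i j. 2*A * ((a$i*a$j - (1/2)*N*G$i$j)/N^2) + 2*B * ((a$i*b$j + b$i*a$j)/(2*N*N)))"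
  have bR: "bil R u v = (2*A/N^2)*(bil G u xi * bil G v xi - (1/2)*N*bil G u v)
      + (B/N^2)*(bil G u xi * bil G v xp + bil G u xp * bil G v xi)" for u v
  proof -
    have "bil R u v * N^2 = 2*A*(bil G u xi * bil G v xi - (1/2)*N*bil G u v)
      + B*(bil G u xi * bil G v xp + bil G u xp * bil G v xi)"
      unfolding R_def bil_def a_def b_def using Npos
      by (simp add: sum_2 field_simps power2_eq_square)
    moreover have "((2*A/N^2)*(bil G u xi * bil G v xi - (1/2)*N*bil G u v)
      + (B/N^2)*(bil G u xi * bil G v xp + bil G u xp * bil G v xi)) * N^2 = 2*A*(bil G u xi * bil G v xi - (1/2)*N*bil G u v)
      + B*(bil G u xi * bil G v xp + bil G u xp * bil G v xi)"
      using Npos by (simp add: field_simps power2_eq_square)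
    ultimately show ?thesis using Npos by (metis mult_right_cancel zero_less_power less_irrefl)
  qed
  have sD: "bil Dm xp xi = B" unfolding B_def using bil_sym[OF symD] by metis
  define Q where "Q = Dm - R"
  have Q1: "bil Q xi xi = 0" "bil Q xi xp = 0" "bil Q xp xi = 0" "bil Q xp xp = 0"
    unfolding Q_def bil_mdiff bR using nxi nxp orth sxp Npos tr sD
    by (simp_all add: A_def B_def field_simps power2_eq_square)
  define q where "q = (\<chi> i. \<Sum>j\<in>UNIV. Q$i$j * xi$j)"
  define q' where "q' = (\<chi> i. \<Sum>j\<in>UNIV. Q$i$j * xp$j)"
  have "q$1*xi$1 + q$2*xi$2 = bil Q xi xi" "q$1*xp$1 + q$2*xp$2 = bil Q xp xi"
       "q'$1*xi$1 + q'$2*xi$2 = bil Q xi xp" "q'$1*xp$1 + q'$2*xp$2 = bil Q xp xp"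
    unfolding q_def q'_def bil_def by (simp_all add: sum_2 algebra_simps)
  then have "q = 0" "q' = 0" using L0 Q1 by simp_all
  then have r: "Q$i$1 * xi$1 + Q$i$2 * xi$2 = 0" "Q$i$1 * xp$1 + Q$i$2 * xp$2 = 0"
    unfolding q_def q'_def by (simp_all add: vec_eq_iff sum_2)
  have "Q$i = 0" using L0[of "Q$i"] r by simp
  then have "Dm$i$j = R$i$j" unfolding Q_def by (simp add: vec_eq_iff)
  then show ?thesis unfolding R_def by simp
qed

end



lemma smooth_diff:
  assumes "smooth_fun_on f U" "open U" "x \<in> U"
  shows "f differentiable at x"
proof -
  have "Ck_on (Suc 0) f U" using assms(1) unfolding smooth_fun_on_def by blast
  then have "f differentiable_on U" by simp
  then show ?thesis using assms(2,3) differentiable_on_eq_differentiable_at by blast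
qed

lemma smooth_cdt: "smooth_tfield_on T U \<Longrightarrow> open U \<Longrightarrow> x \<in> U \<Longrightarrow> cdt T x"
  unfolding smooth_tfield_on_def cdt_def using smooth_diff by blast
lemma smooth_cdv: "smooth_vfield_on T U \<Longrightarrow> open U \<Longrightarrow> x \<in> U \<Longrightarrow> cdv T x"
  unfolding smooth_vfield_on_def cdv_def using smooth_diff by blast

lemma bil_differentiable:
  assumes "cdt T x" "cdv Y x" "cdv Z x"
  shows "(\<lambda>y. bil (T y) (Y y) (Z y)) differentiable at x"
  using assms unfolding bil_def cdt_def cdv_def by simp

lemma dirv_local:
  assumes "open U" "x \<in> U" "\<And>y. y \<in> U \<Longrightarrow> f y = h y" "h differentiable at x"
  shows "dirv X f x = dirv X h x"
  unfolding dirv_def using pd_local[OF assms] by simp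

lemma dirv_zero:
  assumes "open U" "x \<in> U" "\<And>y. y \<in> U \<Longrightarrow> f y = c"
  shows "dirv X f x = 0"
  unfolding dirv_def using pd_zero[OF assms] by simp

lemma dirv_minus:
  assumes "f differentiable at x"
  shows "dirv X (\<lambda>y. - f y) x = - dirv X f x"
proof -
  have "pd k (\<lambda>y. 0 - f y) x = pd k (\<lambda>y. 0) x - pd k f x" for k
    by (rule pd_diff) (use assms in auto)
  then have "pd k (\<lambda>y. - f y) x = - pd k f x" for k by (simp add: pd_const)
  then show ?thesis unfolding dirv_def by (simp add: sum_negf)
qed

lemma dirv_2: "dirv X f x = X x$1 * pd 1 f x + X x$2 * pd 2 f x"
  unfolding dirv_def by (simp add: sum_2)

lemma zero_deriv:
  assumes "f differentiable at x" "\<And>k. pd k f x = 0"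
  shows "(f has_derivative (\<lambda>h. 0)) (at x)"
proof -
  let ?F = "frechet_derivative f (at x)"
  have d: "(f has_derivative ?F) (at x)" using assms(1) frechet_derivative_works by blast
  then have lin: "linear ?F" using has_derivative_linear by blast
  have "?F h = 0" for h :: "real^2"
  proof -
    have "?F h = ?F (\<Sum>i\<in>UNIV. (h$i) *s axis i 1)" by (simp add: basis_expansion)
    also have "\<dots> = (\<Sum>i\<in>UNIV. h$i * ?F (axis i 1))"
      using lin by (simp add: linear_sum linear_scale scalar_mult_eq_scaleR)
    also have "\<dots> = 0" using assms(2) by (simp add: pd_def)
    finally show ?thesis .
  qed
  then have "?F = (\<lambda>h. 0)" by auto
  then show ?thesis using d by simp
qed

lemma brk_self: "brk X X x = 0"
  unfolding brk_def by (simp add: vec_eq_iff)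

lemma bil_zero2: "bil G w 0 = 0"
  unfolding bil_def by (simp add: sum_2)

lemma lie_contract:
  assumes "\<And>i j. lie_deriv X T x i j = c * T x$i$j"
  shows "(\<Sum>b\<in>UNIV. \<Sum>d\<in>UNIV. lie_deriv X T x b d * Y$b * Z$d) = c * bil (T x) Y Z"
  unfolding assms bil_def by (simp add: sum_2 algebra_simps)

lemma gdot_bil: "gdot g x u w = bil (g x) u w"
  unfolding gdot_def bil_def by simp

lemma trans_contract:
  fixes cv :: "2 \<Rightarrow> 2 \<Rightarrow> 2 \<Rightarrow> real"
  assumes "N \<noteq> 0"
  shows "(\<Sum>c\<in>UNIV. Y$c * (\<Sum>a\<in>UNIV. \<Sum>b\<in>UNIV. (\<chi> i j. (xi$i*xi$j + xp$i*xp$j)/N)$a$b * cv a b c))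
   = ((\<Sum>a\<in>UNIV. \<Sum>b\<in>UNIV. \<Sum>c\<in>UNIV. xi$a * xi$b * Y$c * cv a b c)
     + (\<Sum>a\<in>UNIV. \<Sum>b\<in>UNIV. \<Sum>c\<in>UNIV. xp$a * xp$b * Y$c * cv a b c)) / N"
  using assms by (simp add: sum_2 field_simps)




theorem theorem9p2:
  fixes U :: "(real^2) set" and g D :: tfield and \<xi> \<xi>p :: vfield
  assumes "open U" and "connected U"
    and "riemannian_metric_on g U"
    and "conformal_killing_on g \<xi> U"
    and "\<forall>x\<in>U. \<xi> x \<noteq> 0"
    and "conformal_killing_on g \<xi>p U"
    and "\<forall>x\<in>U. gdot g x (\<xi> x) (\<xi>p x) = 0"
    and "\<forall>x\<in>U. gdot g x (\<xi>p x) (\<xi>p x) = gdot g x (\<xi> x) (\<xi> x)"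
    and "smooth_tfield_on D U" and "symmetric_tfield_on D U"
    and "transverse_on g D U" and "traceless_on g D U"
    and "\<forall>x\<in>U. \<forall>i j. lie_deriv \<xi> D x i j = 0"
  shows "\<exists>a b :: real. \<forall>x\<in>U. \<forall>i j.
           D x $ i $ j = a * D_xi g \<xi> x $ i $ j + b * D_xi_perp g \<xi> \<xi>p x $ i $ j"
proof -
  note openU = assms(1)
  have smg: "smooth_tfield_on g U" and symg: "\<And>x i j. x \<in> U \<Longrightarrow> g x$i$j = g x$j$i"
    and posg: "\<And>x v. x \<in> U \<Longrightarrow> v \<noteq> 0 \<Longrightarrow> bil (g x) v v > 0"
    using assms(3) unfolding riemannian_metric_on_def symmetric_tfield_on_def bil_def by auto
  have smx: "smooth_vfield_on \<xi> U" using assms(4) unfolding conformal_killing_on_def by blast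
  obtain s where s: "\<And>x i j. x \<in> U \<Longrightarrow> lie_deriv \<xi> g x i j = s x * g x$i$j"
    using assms(4) unfolding conformal_killing_on_def by blast
  have smp: "smooth_vfield_on \<xi>p U" using assms(6) unfolding conformal_killing_on_def by blast
  have symD: "\<And>x i j. x \<in> U \<Longrightarrow> D x$i$j = D x$j$i"
    using assms(10) unfolding symmetric_tfield_on_def by blast
  have orth: "\<And>x. x \<in> U \<Longrightarrow> bil (g x) (\<xi> x) (\<xi>p x) = 0" using assms(7) gdot_bil by metis
  have nrm: "\<And>x. x \<in> U \<Longrightarrow> bil (g x) (\<xi>p x) (\<xi>p x) = bil (g x) (\<xi> x) (\<xi> x)"
    using assms(8) gdot_bil by metis
  define N where "N y = bil (g y) (\<xi> y) (\<xi> y)" for y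
  have fr: "frame (g x) (\<xi> x) (\<xi>p x) (N x)" if x: "x \<in> U" for x
    apply unfold_locales
    using symg[OF x] posg[OF x] orth[OF x] nrm[OF x] assms(5) x unfolding N_def by auto
  have ginvM: "ginv g x = (\<chi> i j. (\<xi> x$i * \<xi> x$j + \<xi>p x$i * \<xi>p x$j) / N x)" if x: "x \<in> U" for x
    using frame.ginv_M[OF fr[OF x]] frame.M_def[OF fr[OF x]] unfolding ginv_def by simp
  have trD: "bil (D x) (\<xi> x) (\<xi> x) + bil (D x) (\<xi>p x) (\<xi>p x) = 0" if x: "x \<in> U" for x
  proof -
    have "(\<Sum>a\<in>UNIV. \<Sum>b\<in>UNIV. ginv g x $ a $ b * D x $ a $ b) = 0"
      using assms(12) x unfolding traceless_on_def by blast
    then have "(bil (D x) (\<xi> x) (\<xi> x) + bil (D x) (\<xi>p x) (\<xi>p x)) / N x = 0"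
      using frame.trace_M[OF fr[OF x], of "D x"] frame.ginv_M[OF fr[OF x]] unfolding ginv_def by simp
    then show ?thesis using frame.Npos[OF fr[OF x]] by simp
  qed
  define A where "A = (\<lambda>y. bil (D y) (\<xi> y) (\<xi> y))"
  define B where "B = (\<lambda>y. bil (D y) (\<xi> y) (\<xi>p y))"
  have main: "pd k A x = 0 \<and> pd k B x = 0" if x: "x \<in> U" for x k
  proof -
    interpret F: frame "g x" "\<xi> x" "\<xi>p x" "N x" by (rule fr[OF x])
    have cg: "cdt g x" using smooth_cdt[OF smg openU x] .
    have cD: "cdt D x" using smooth_cdt[OF assms(9) openU x] .
    have cx: "cdv \<xi> x" using smooth_cdv[OF smx openU x] .
    have cp: "cdv \<xi>p x" using smooth_cdv[OF smp openU x] .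
    have symgx: "\<And>i j. g x$i$j = g x$j$i" using symg[OF x] .
    have bs: "\<And>u v. bil (g x) u v = bil (g x) v u" using bil_sym[OF symgx] .
    have bsD: "\<And>u v. bil (D x) u v = bil (D x) v u" using bil_sym[OF symD[OF x]] by blast
    have symd: "\<And>k i j. pd k (\<lambda>y. g y$i$j) x = pd k (\<lambda>y. g y$j$i) x"
      apply (rule pd_local[OF openU x]) using symg cg unfolding cdt_def by auto
    have GH: "g x ** ginv g x = mat 1" using F.GM F.ginv_M unfolding ginv_def by simp
    define w where "w = brk \<xi> \<xi>p x"
    have sx: "\<And>i j. lie_deriv \<xi> g x i j = s x * g x$i$j" using s[OF x] .
    have e1: "dirv \<xi> (\<lambda>y. bil (g y) (\<xi> y) (\<xi>p y)) x = s x * bil (g x) (\<xi> x) (\<xi>p x)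
        + bil (g x) (brk \<xi> \<xi> x) (\<xi>p x) + bil (g x) (\<xi> x) w"
      using G3[OF cg cx cp, of \<xi>] lie_contract[OF sx] unfolding w_def by simp
    have "dirv \<xi> (\<lambda>y. bil (g y) (\<xi> y) (\<xi>p y)) x = 0"
      by (rule dirv_zero[OF openU x]) (rule orth)
    then have "bil (g x) (\<xi> x) w = 0" using e1 orth[OF x] by (simp add: brk_self bil_zero1)
    then have w1: "bil (g x) w (\<xi> x) = 0" using bs[of w "\<xi> x"] by simp
    have e2: "dirv \<xi> (\<lambda>y. bil (g y) (\<xi>p y) (\<xi>p y)) x = s x * bil (g x) (\<xi>p x) (\<xi>p x)
        + bil (g x) w (\<xi>p x) + bil (g x) (\<xi>p x) w"
      using G3[OF cg cp cp, of \<xi>] lie_contract[OF sx] unfolding w_def by simp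
    have e3: "dirv \<xi> (\<lambda>y. bil (g y) (\<xi> y) (\<xi> y)) x = s x * bil (g x) (\<xi> x) (\<xi> x)"
      using G3[OF cg cx cx, of \<xi>] lie_contract[OF sx] brk_self bil_zero1 bil_zero2 by simp
    have e4: "dirv \<xi> (\<lambda>y. bil (g y) (\<xi>p y) (\<xi>p y)) x = dirv \<xi> (\<lambda>y. bil (g y) (\<xi> y) (\<xi> y)) x"
      by (rule dirv_local[OF openU x]) (auto intro: nrm bil_differentiable[OF cg cx cx])
    have w2: "bil (g x) w (\<xi>p x) = 0" using e2 e3 e4 nrm[OF x] bs[of w] by simp
    have w0: "w = 0" using F.nondeg[OF w1 w2] .
    have kx: "\<And>i j. lie_deriv \<xi> D x i j = 0 * D x$i$j" using assms(13) x by simp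
    have dA: "dirv \<xi> A x = 0"
      unfolding A_def using G3[OF cD cx cx, of \<xi>] lie_contract[OF kx] brk_self bil_zero1 bil_zero2 by simp
    have dB: "dirv \<xi> B x = 0"
      unfolding B_def using G3[OF cD cx cp, of \<xi>] lie_contract[OF kx] brk_self bil_zero1 bil_zero2 w0
      unfolding w_def by simp
    have cgg: "\<And>a b c. cov_deriv g g x a b c = 0" using G2[OF GH symgx symd] .
    have mc: "dirv X (\<lambda>y. bil (g y) (Y y) (Z y)) x = bil (g x) (nab g X Y x) (Z x) + bil (g x) (Y x) (nab g X Z x)"
      if "cdv Y x" "cdv Z x" for X Y Z
      using G1[OF cg that, of X g] cgg by simp
    define P where "P X Y Z = bil (g x) (nab g X Y x) (Z x)" for X Y Z
    have PX: "P X \<xi> \<xi>p + P X \<xi>p \<xi> = 0 \<and> P X \<xi>p \<xi>p = P X \<xi> \<xi>" for X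
    proof -
      have "dirv X (\<lambda>y. bil (g y) (\<xi> y) (\<xi>p y)) x = 0"
        by (rule dirv_zero[OF openU x]) (rule orth)
      then have 1: "P X \<xi> \<xi>p + P X \<xi>p \<xi> = 0" using mc[OF cx cp, of X] bs[of "\<xi> x" "nab g X \<xi>p x"] unfolding P_def by simp
      have "dirv X (\<lambda>y. bil (g y) (\<xi>p y) (\<xi>p y)) x = dirv X (\<lambda>y. bil (g y) (\<xi> y) (\<xi> y)) x"
        by (rule dirv_local[OF openU x]) (auto intro: nrm bil_differentiable[OF cg cx cx])
      then have 2: "P X \<xi>p \<xi>p = P X \<xi> \<xi>" using mc[OF cx cx, of X] mc[OF cp cp, of X]
          bs[of "\<xi> x" "nab g X \<xi> x"] bs[of "\<xi>p x" "nab g X \<xi>p x"] unfolding P_def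
        by linarith
      show ?thesis using 1 2 by blast
    qed
    have tor: "nab g \<xi> \<xi>p x = nab g \<xi>p \<xi> x" using G4[OF symd, of \<xi> \<xi>p] w0 unfolding w_def by simp
    have torP: "P \<xi> \<xi>p Z = P \<xi>p \<xi> Z" for Z unfolding P_def tor ..
    define V where "V = nab g \<xi> \<xi> x + nab g \<xi>p \<xi>p x"
    have "bil (g x) V (\<xi> x) = P \<xi> \<xi> \<xi> + P \<xi>p \<xi>p \<xi>" unfolding V_def P_def bil_add1 ..
    also have "\<dots> = 0" using PX[of \<xi>] PX[of \<xi>p] torP[of \<xi>] torP[of \<xi>p] by linarith
    finally have V1: "bil (g x) V (\<xi> x) = 0" .
    have "bil (g x) V (\<xi>p x) = P \<xi> \<xi> \<xi>p + P \<xi>p \<xi>p \<xi>p" unfolding V_def P_def bil_add1 ..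
    also have "\<dots> = 0" using PX[of \<xi>] PX[of \<xi>p] torP[of \<xi>] torP[of \<xi>p] by linarith
    finally have V2: "bil (g x) V (\<xi>p x) = 0" .
    have V0: "V = 0" using F.nondeg[OF V1 V2] .
    have tv: "\<And>c. (\<Sum>a\<in>UNIV. \<Sum>b\<in>UNIV. ginv g x $ a $ b * cov_deriv g D x a b c) = 0"
      using assms(11) x unfolding transverse_on_def by blast
    have Npos: "N x > 0" using F.Npos .
    have cdeq: "dirv \<xi> (\<lambda>y. bil (D y) (\<xi> y) (Y y)) x + dirv \<xi>p (\<lambda>y. bil (D y) (\<xi>p y) (Y y)) x
       = bil (D x) (\<xi> x) (nab g \<xi> Y x) + bil (D x) (\<xi>p x) (nab g \<xi>p Y x)" if cY: "cdv Y x" for Y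
    proof -
      have "(\<Sum>c\<in>UNIV. Y x$c * (\<Sum>a\<in>UNIV. \<Sum>b\<in>UNIV. ginv g x $ a $ b * cov_deriv g D x a b c)) = 0"
        using tv by simp
      then have "((\<Sum>a\<in>UNIV. \<Sum>b\<in>UNIV. \<Sum>c\<in>UNIV. \<xi> x$a * \<xi> x$b * Y x$c * cov_deriv g D x a b c)
         + (\<Sum>a\<in>UNIV. \<Sum>b\<in>UNIV. \<Sum>c\<in>UNIV. \<xi>p x$a * \<xi>p x$b * Y x$c * cov_deriv g D x a b c)) / N x = 0"
        using trans_contract[where N="N x" and Y="Y x" and xi="\<xi> x" and xp="\<xi>p x" and cv="cov_deriv g D x"] Npos ginvM[OF x] by simp
      then have "(\<Sum>a\<in>UNIV. \<Sum>b\<in>UNIV. \<Sum>c\<in>UNIV. \<xi> x$a * \<xi> x$b * Y x$c * cov_deriv g D x a b c)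
         + (\<Sum>a\<in>UNIV. \<Sum>b\<in>UNIV. \<Sum>c\<in>UNIV. \<xi>p x$a * \<xi>p x$b * Y x$c * cov_deriv g D x a b c) = 0"
        using Npos by simp
      then have "dirv \<xi> (\<lambda>y. bil (D y) (\<xi> y) (Y y)) x - bil (D x) (nab g \<xi> \<xi> x) (Y x) - bil (D x) (\<xi> x) (nab g \<xi> Y x)
        + (dirv \<xi>p (\<lambda>y. bil (D y) (\<xi>p y) (Y y)) x - bil (D x) (nab g \<xi>p \<xi>p x) (Y x) - bil (D x) (\<xi>p x) (nab g \<xi>p Y x)) = 0"
        unfolding G1[OF cD cx cY] G1[OF cD cp cY] .
      moreover have "bil (D x) (nab g \<xi> \<xi> x) (Y x) + bil (D x) (nab g \<xi>p \<xi>p x) (Y x) = 0"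
        using V0 unfolding V_def bil_add1[symmetric] by (simp add: bil_zero1)
      ultimately show ?thesis by linarith
    qed
    have dec1: "bil (D x) (\<xi> x) v = (bil (g x) v (\<xi> x) / N x) * A x + (bil (g x) v (\<xi>p x) / N x) * B x" for v
      unfolding A_def B_def by (rule F.decD)
    have dec2: "bil (D x) (\<xi>p x) v = (bil (g x) v (\<xi> x) / N x) * B x - (bil (g x) v (\<xi>p x) / N x) * A x" for v
    proof -
      have "bil (D x) (\<xi>p x) (\<xi>p x) = - bil (D x) (\<xi> x) (\<xi> x)" using trD[OF x] by linarith
      then show ?thesis
        using F.decD[of "D x" "\<xi>p x" v] bsD[of "\<xi>p x" "\<xi> x"] unfolding A_def B_def
        by (simp add: algebra_simps)
    qed
    have r1: "bil (D x) (\<xi> x) (nab g \<xi> \<xi> x) + bil (D x) (\<xi>p x) (nab g \<xi>p \<xi> x) = 0"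
    proof -
      have "bil (D x) (\<xi> x) (nab g \<xi> \<xi> x) + bil (D x) (\<xi>p x) (nab g \<xi>p \<xi> x)
         = (A x * (P \<xi> \<xi> \<xi> - P \<xi>p \<xi> \<xi>p) + B x * (P \<xi> \<xi> \<xi>p + P \<xi>p \<xi> \<xi>)) / N x"
        unfolding dec1 dec2 P_def using Npos by (simp add: field_simps)
      also have "\<dots> = 0" using PX[of \<xi>] torP[of \<xi>] torP[of \<xi>p] by simp
      finally show ?thesis .
    qed
    have r2: "bil (D x) (\<xi> x) (nab g \<xi> \<xi>p x) + bil (D x) (\<xi>p x) (nab g \<xi>p \<xi>p x) = 0"
    proof -
      have "bil (D x) (\<xi> x) (nab g \<xi> \<xi>p x) + bil (D x) (\<xi>p x) (nab g \<xi>p \<xi>p x)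
         = (A x * (P \<xi> \<xi>p \<xi> - P \<xi>p \<xi>p \<xi>p) + B x * (P \<xi> \<xi>p \<xi>p + P \<xi>p \<xi>p \<xi>)) / N x"
        unfolding dec1 dec2 P_def using Npos by (simp add: field_simps)
      also have "\<dots> = 0" using PX[of \<xi>] PX[of \<xi>p] torP[of \<xi>] torP[of \<xi>p] by (simp add: algebra_simps)
      finally show ?thesis .
    qed
    have cA: "A differentiable at x" unfolding A_def by (rule bil_differentiable[OF cD cx cx])
    have cB: "B differentiable at x" unfolding B_def by (rule bil_differentiable[OF cD cx cp])
    have "dirv \<xi>p (\<lambda>y. bil (D y) (\<xi>p y) (\<xi> y)) x = dirv \<xi>p B x"
      by (rule dirv_local[OF openU x _ cB]) (simp add: B_def bil_sym[OF symD])
    then have dB2: "dirv \<xi>p B x = 0" using cdeq[OF cx] r1 dA unfolding A_def by simp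
    have "dirv \<xi>p (\<lambda>y. bil (D y) (\<xi>p y) (\<xi>p y)) x = dirv \<xi>p (\<lambda>y. - A y) x"
    proof (rule dirv_local[OF openU x])
      fix y assume "y \<in> U"
      then show "bil (D y) (\<xi>p y) (\<xi>p y) = - A y" using trD[of y] unfolding A_def by linarith
    next
      show "(\<lambda>y. - A y) differentiable at x" using cA by simp
    qed
    then have dA2: "dirv \<xi>p A x = 0" using cdeq[OF cp] r2 dB dirv_minus[OF cA] unfolding B_def by simp
    have gA: "(\<chi> k. pd k A x) = 0"
      by (rule F.L0) (use dA dA2 in \<open>simp_all add: dirv_2 algebra_simps\<close>)
    have gB: "(\<chi> k. pd k B x) = 0"
      by (rule F.L0) (use dB dB2 in \<open>simp_all add: dirv_2 algebra_simps\<close>)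
    show ?thesis using gA gB by (simp add: vec_eq_iff)
  qed
  have const: "\<exists>c. \<forall>y\<in>U. f y = c" if "f = A \<or> f = B" for f
  proof -
    have df: "f differentiable at y" if "y \<in> U" for y
      using \<open>f = A \<or> f = B\<close> bil_differentiable smooth_cdt[OF assms(9) openU that]
        smooth_cdv[OF smx openU that] smooth_cdv[OF smp openU that] unfolding A_def B_def by blast
    have hd: "(f has_derivative (\<lambda>h. 0)) (at y)" if "y \<in> U" for y
      using zero_deriv[OF df[OF that]] main[OF that] \<open>f = A \<or> f = B\<close> by blast
    have "continuous_on U f"
      using df differentiable_imp_continuous_within continuous_at_imp_continuous_on by blast
    then have "f constant_on U"
      using has_derivative_zero_connected_constant_on[OF assms(2) openU finite.emptyI, of f] hd
        has_derivative_at_withinI by blast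
    then show ?thesis unfolding constant_on_def by blast
  qed
  obtain a0 where a0: "\<forall>y\<in>U. A y = a0" using const by blast
  obtain b0 where b0: "\<forall>y\<in>U. B y = b0" using const by blast
  show ?thesis
  proof (intro exI ballI allI)
    fix x i j assume x: "x \<in> U"
    have "D x$i$j = 2 * A x * ((flat g \<xi> x$i * flat g \<xi> x$j - (1/2) * N x * g x$i$j) / (N x)^2)
        + 2 * B x * ((flat g \<xi> x$i * flat g \<xi>p x$j + flat g \<xi>p x$i * flat g \<xi> x$j) / (2 * N x * N x))"
      using frame.recon[OF fr[OF x] symD[OF x] trD[OF x], of i j] unfolding A_def B_def flat_def by simp
    then show "D x$i$j = (2*a0) * D_xi g \<xi> x $ i $ j + (2*b0) * D_xi_perp g \<xi> \<xi>p x $ i $ j"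
      using a0 b0 x nrm[OF x] unfolding D_xi_def D_xi_perp_def gdot_bil N_def by simp
  qed
qed



end
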